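(* Every proper sequence in a semigroup has a sumsequence $b_1,b_2,\dotsc$ such that $b_F\ne b_G$ for all disjoint nonempty finite index sets $F,G\subseteq\mathbb N$.
   Context: Semigroups are written additively and are not assumed commutative. For a sequence $a_1,a_2,\dotsc$ and a finite nonempty index set $F=\{i_1<\dotsb<i_m\}$, $a_F:=a_{i_1}+\dotsb+a_{i_m}$ (summed in increasing order of indices); $F_1<F_2$ means every element of $F_1$ is smaller than every element of $F_2$. A sumsequence of $a_1,a_2,\dotsc$ is a sequence $a_{F_1},a_{F_2},\dotsc$ for nonempty finite index sets $F_1<F_2<\dotsb$. A sequence is proper if $a_{F_1}\ne a_{F_2}$ for all nonempty finite $F_1<F_2$. *)

theory Defs
  imports Main
begin

text \<open>a_F for a nonempty finite index set F: the sum a_{i_1} + ... + a_{i_m}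
  taken in increasing order of the indices i_1 < ... < i_m (left-associated;
  the semigroup is associative, so the bracketing is irrelevant).\<close>
definition fsum :: "(nat \<Rightarrow> 'a::semigroup_add) \<Rightarrow> nat set \<Rightarrow> 'a" where
  "fsum a F = (let xs = map a (sorted_list_of_set F)
               in fold (\<lambda>x acc. acc + x) (tl xs) (hd xs))"

definition set_less :: "nat set \<Rightarrow> nat set \<Rightarrow> bool" where
  "set_less F1 F2 = (\<forall>x\<in>F1. \<forall>y\<in>F2. x < y)"

definition proper_seq :: "(nat \<Rightarrow> 'a::semigroup_add) \<Rightarrow> bool" where
  "proper_seq a = (\<forall>F1 F2. finite F1 \<and> F1 \<noteq> {} \<and> finite F2 \<and> F2 \<noteq> {} \<and> set_less F1 F2
                      \<longrightarrow> fsum a F1 \<noteq> fsum a F2)"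

definition sumsequence :: "(nat \<Rightarrow> 'a::semigroup_add) \<Rightarrow> (nat \<Rightarrow> 'a) \<Rightarrow> bool" where
  "sumsequence a b = (\<exists>Fs :: nat \<Rightarrow> nat set.
      (\<forall>n. finite (Fs n) \<and> Fs n \<noteq> {}) \<and>
      (\<forall>n. set_less (Fs n) (Fs (Suc n))) \<and>
      (\<forall>n. b n = fsum a (Fs n)))"

end

theory Submission
  imports Defs
begin


definition filt :: "'x set set \<Rightarrow> bool" where
 "filt F \<longleftrightarrow> UNIV \<in> F \<and> {} \<notin> F \<and> (\<forall>A B. A \<in> F \<longrightarrow> A \<subseteq> B \<longrightarrow> B \<in> F)
     \<and> (\<forall>A B. A \<in> F \<longrightarrow> B \<in> F \<longrightarrow> A \<inter> B \<in> F)"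

definition ultra :: "'x set set \<Rightarrow> bool" where
 "ultra U \<longleftrightarrow> filt U \<and> (\<forall>A. A \<in> U \<or> -A \<in> U)"

lemma filt_UNIV: "filt F \<Longrightarrow> UNIV \<in> F" by (simp add: filt_def)
lemma filt_empty: "filt F \<Longrightarrow> {} \<notin> F" by (simp add: filt_def)
lemma filt_mono: "filt F \<Longrightarrow> A \<in> F \<Longrightarrow> A \<subseteq> B \<Longrightarrow> B \<in> F" by (simp add: filt_def)
lemma filt_Int: "filt F \<Longrightarrow> A \<in> F \<Longrightarrow> B \<in> F \<Longrightarrow> A \<inter> B \<in> F" by (simp add: filt_def)

lemma ultra_filt: "ultra U \<Longrightarrow> filt U" by (simp add: ultra_def)
lemma ultra_compl: "ultra U \<Longrightarrow> A \<notin> U \<Longrightarrow> -A \<in> U" by (auto simp add: ultra_def)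
lemma ultra_not_both: "ultra U \<Longrightarrow> A \<in> U \<Longrightarrow> -A \<in> U \<Longrightarrow> False"
  using filt_Int[of U A "-A"] filt_empty[of U] by (auto simp: ultra_def)
lemma ultra_compl_iff: "ultra U \<Longrightarrow> -A \<in> U \<longleftrightarrow> A \<notin> U"
  using ultra_compl ultra_not_both by blast

lemma ultra_subset_eq: assumes "ultra U" "ultra V" "U \<subseteq> V" shows "U = V"
proof
  show "V \<subseteq> U"
  proof
    fix A assume "A \<in> V"
    show "A \<in> U"
    proof (rule ccontr)
      assume "A \<notin> U" then have "-A \<in> U" using assms(1) ultra_compl by blast
      then have "-A \<in> V" using assms(3) by blast
      then show False using \<open>A \<in> V\<close> assms(2) ultra_not_both by blast
    qed
  qed
qed (fact assms(3))

lemma filt_chain_Union: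
  assumes "C \<noteq> {}" "\<forall>G\<in>C. filt G" "chain\<^sub>\<subseteq> C"
  shows "filt (\<Union>C)"
  unfolding filt_def
proof (intro conjI allI impI)
  obtain G0 where "G0 \<in> C" using assms(1) by blast
  then show "UNIV \<in> \<Union>C" using assms(2) filt_UNIV by blast
  show "{} \<notin> \<Union>C" using assms(2) filt_empty by blast
  show "B \<in> \<Union>C" if h: "A \<in> \<Union>C" "A \<subseteq> B" for A B
  proof -
    obtain G where "G \<in> C" "A \<in> G" using h by blast
    then have "B \<in> G" using filt_mono[of G A B] h(2) assms(2) by blast
    then show ?thesis using \<open>G \<in> C\<close> by blast
  qed
  show "A \<inter> B \<in> \<Union>C" if h: "A \<in> \<Union>C" "B \<in> \<Union>C" for A B
  proof -
    obtain G1 G2 where "G1 \<in> C" "G2 \<in> C" "A \<in> G1" "B \<in> G2" using h by blast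
    then have "G1 \<subseteq> G2 \<or> G2 \<subseteq> G1" using assms(3) unfolding chain_subset_def by blast
    then show ?thesis
    proof
      assume "G1 \<subseteq> G2"
      then have "A \<inter> B \<in> G2" using \<open>G2 \<in> C\<close> \<open>A \<in> G1\<close> \<open>B \<in> G2\<close> assms(2) filt_Int by blast
      then show ?thesis using \<open>G2 \<in> C\<close> by blast
    next
      assume "G2 \<subseteq> G1"
      then have "A \<inter> B \<in> G1" using \<open>G1 \<in> C\<close> \<open>A \<in> G1\<close> \<open>B \<in> G2\<close> assms(2) filt_Int by blast
      then show ?thesis using \<open>G1 \<in> C\<close> by blast
    qed
  qed
qed

lemma ultra_ext:
  assumes F: "filt F"
  shows "\<exists>U. ultra U \<and> F \<subseteq> U"
proof -
  define Z where "Z = {G. filt G \<and> F \<subseteq> G}"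
  have "\<forall>C\<in>chains Z. \<exists>U\<in>Z. \<forall>X\<in>C. X \<subseteq> U"
  proof
    fix C assume C: "C \<in> chains Z"
    then have CZ: "C \<subseteq> Z" and ch: "chain\<^sub>\<subseteq> C" unfolding chains_def by auto
    show "\<exists>U\<in>Z. \<forall>X\<in>C. X \<subseteq> U"
    proof (cases "C = {}")
      case True
      have "F \<in> Z" using F unfolding Z_def by simp
      then show ?thesis using True by blast
    next
      case False
      have "\<forall>G\<in>C. filt G" using CZ unfolding Z_def by auto
      then have "filt (\<Union>C)" using filt_chain_Union[OF False _ ch] by simp
      moreover have "F \<subseteq> \<Union>C" using False CZ unfolding Z_def by auto
      ultimately have "\<Union>C \<in> Z" unfolding Z_def by simp
      then show ?thesis by (intro bexI[of _ "\<Union>C"]) auto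
    qed
  qed
  from Zorn_Lemma2[OF this] obtain M where M: "M \<in> Z" and max: "\<And>X. X\<in>Z \<Longrightarrow> M \<subseteq> X \<Longrightarrow> X = M"
    by blast
  have fM: "filt M" and FM: "F \<subseteq> M" using M unfolding Z_def by auto
  have "ultra M" unfolding ultra_def
  proof (intro conjI allI)
    show "filt M" by (fact fM)
    fix A
    show "A \<in> M \<or> -A \<in> M"
    proof (rule ccontr)
      assume nA: "\<not> (A \<in> M \<or> -A \<in> M)"
      define G where "G = {B. \<exists>C\<in>M. C \<inter> A \<subseteq> B}"
      have "filt G" unfolding filt_def
      proof (intro conjI allI impI)
        show "UNIV \<in> G" unfolding G_def using filt_UNIV[OF fM] by blast
        show "{} \<notin> G"
        proof
          assume "{} \<in> G"
          then obtain C where "C \<in> M" "C \<inter> A \<subseteq> {}" unfolding G_def by blast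
          then have "C \<subseteq> -A" by blast
          then have "-A \<in> M" using filt_mono[OF fM \<open>C \<in> M\<close>] by simp
          then show False using nA by simp
        qed
        show "B' \<in> G" if h: "B \<in> G" "B \<subseteq> B'" for B B'
        proof -
          obtain C where "C \<in> M" "C \<inter> A \<subseteq> B" using h(1) unfolding G_def by blast
          have "C \<inter> A \<subseteq> B'" using \<open>C \<inter> A \<subseteq> B\<close> h(2) by (rule subset_trans)
          then show ?thesis unfolding G_def using \<open>C \<in> M\<close> by blast
        qed
        show "B \<inter> B' \<in> G" if h: "B \<in> G" "B' \<in> G" for B B'
        proof -
          obtain C C' where "C \<in> M" "C' \<in> M" "C \<inter> A \<subseteq> B" "C' \<inter> A \<subseteq> B'"
            using h unfolding G_def by blast
          moreover have "C \<inter> C' \<in> M" using filt_Int[OF fM \<open>C \<in> M\<close> \<open>C' \<in> M\<close>] .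
          ultimately have "(C \<inter> C') \<inter> A \<subseteq> B \<inter> B'" by blast
          then show ?thesis unfolding G_def using \<open>C \<inter> C' \<in> M\<close> by (intro CollectI bexI)
        qed
      qed
      moreover have "M \<subseteq> G" unfolding G_def by blast
      ultimately have "G = M" using max FM unfolding Z_def by auto
      moreover have "A \<in> G" unfolding G_def using filt_UNIV[OF fM] by blast
      ultimately show False using nA by simp
    qed
  qed
  then show ?thesis using FM by blast
qed



definition tlf :: "nat set set set \<Rightarrow> nat set set \<Rightarrow> nat set set" where
  "tlf v A = {K. {L. K \<union> L \<in> A} \<in> v}"

definition star :: "nat set set set \<Rightarrow> nat set set set \<Rightarrow> nat set set set" where
  "star u v = {A. tlf v A \<in> u}"

lemma tlf_UNIV: "filt v \<Longrightarrow> tlf v UNIV = UNIV"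
  unfolding tlf_def using filt_UNIV by auto
lemma tlf_empty: "filt v \<Longrightarrow> tlf v {} = {}"
  unfolding tlf_def using filt_empty by auto
lemma tlf_mono: "filt v \<Longrightarrow> A \<subseteq> B \<Longrightarrow> tlf v A \<subseteq> tlf v B"
proof
  fix K assume v: "filt v" and AB: "A \<subseteq> B" and K: "K \<in> tlf v A"
  have "{L. K \<union> L \<in> A} \<subseteq> {L. K \<union> L \<in> B}" using AB by blast
  then show "K \<in> tlf v B" using K filt_mono[OF v] unfolding tlf_def by blast
qed
lemma tlf_Int: "filt v \<Longrightarrow> tlf v (A \<inter> B) = tlf v A \<inter> tlf v B"
proof
  assume v: "filt v"
  show "tlf v (A \<inter> B) \<subseteq> tlf v A \<inter> tlf v B" using tlf_mono[OF v] by blast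
  show "tlf v A \<inter> tlf v B \<subseteq> tlf v (A \<inter> B)"
  proof
    fix K assume "K \<in> tlf v A \<inter> tlf v B"
    then have "{L. K \<union> L \<in> A} \<in> v" "{L. K \<union> L \<in> B} \<in> v" unfolding tlf_def by auto
    from filt_Int[OF v this] have "{L. K \<union> L \<in> A} \<inter> {L. K \<union> L \<in> B} \<in> v" .
    moreover have "{L. K \<union> L \<in> A} \<inter> {L. K \<union> L \<in> B} = {L. K \<union> L \<in> A \<inter> B}" by blast
    ultimately show "K \<in> tlf v (A \<inter> B)" unfolding tlf_def by simp
  qed
qed
lemma tlf_compl: "ultra v \<Longrightarrow> tlf v (-A) = - tlf v A"
proof -
  assume v: "ultra v"
  have "\<And>K. {L. K \<union> L \<in> -A} = - {L. K \<union> L \<in> A}" by blast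
  then show ?thesis unfolding tlf_def using ultra_compl_iff[OF v] by auto
qed

lemma star_ultra: assumes u: "ultra u" and v: "ultra v" shows "ultra (star u v)"
proof -
  have fu: "filt u" and fv: "filt v" using u v ultra_filt by auto
  have "filt (star u v)" unfolding filt_def star_def
  proof (intro conjI allI impI)
    show "UNIV \<in> {A. tlf v A \<in> u}" using tlf_UNIV[OF fv] filt_UNIV[OF fu] by simp
    show "{} \<notin> {A. tlf v A \<in> u}" using tlf_empty[OF fv] filt_empty[OF fu] by simp
    show "B \<in> {A. tlf v A \<in> u}" if "A \<in> {A. tlf v A \<in> u}" "A \<subseteq> B" for A B
      using that tlf_mono[OF fv, of A B] filt_mono[OF fu] by blast
    show "A \<inter> B \<in> {A. tlf v A \<in> u}" if "A \<in> {A. tlf v A \<in> u}" "B \<in> {A. tlf v A \<in> u}" for A B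
      using that tlf_Int[OF fv, of A B] filt_Int[OF fu] by simp
  qed
  moreover have "A \<in> star u v \<or> -A \<in> star u v" for A
    unfolding star_def using tlf_compl[OF v, of A] ultra_compl_iff[OF u] by auto
  ultimately show ?thesis unfolding ultra_def by blast
qed

lemma star_assoc: "star (star u v) w = star u (star v w)"
proof -
  have "tlf v (tlf w A) = tlf (star v w) A" for A
    unfolding tlf_def star_def by (simp add: Un_assoc)
  then show ?thesis unfolding star_def by (auto simp: tlf_def)
qed

definition Bey :: "nat \<Rightarrow> nat set set" where
  "Bey N = {K. K \<noteq> {} \<and> finite K \<and> (\<forall>x\<in>K. N < x)}"

definition F0 :: "nat set set set" where
  "F0 = {A. \<exists>N. Bey N \<subseteq> A}"

lemma Bey_anti: "N \<le> M \<Longrightarrow> Bey M \<subseteq> Bey N"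
  unfolding Bey_def by auto

lemma filt_F0: "filt F0"
  unfolding filt_def F0_def
proof (intro conjI allI impI)
  show "UNIV \<in> {A. \<exists>N. Bey N \<subseteq> A}" by simp
  have "{Suc N} \<in> Bey N" for N unfolding Bey_def by auto
  then show "{} \<notin> {A. \<exists>N. Bey N \<subseteq> A}" by blast
  show "B \<in> {A. \<exists>N. Bey N \<subseteq> A}" if "A \<in> {A. \<exists>N. Bey N \<subseteq> A}" "A \<subseteq> B" for A B
    using that by blast
  show "A \<inter> B \<in> {A. \<exists>N. Bey N \<subseteq> A}" if h: "A \<in> {A. \<exists>N. Bey N \<subseteq> A}" "B \<in> {A. \<exists>N. Bey N \<subseteq> A}" for A B
  proof -
    obtain N M where "Bey N \<subseteq> A" "Bey M \<subseteq> B" using h by blast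
    then have "Bey (max N M) \<subseteq> A \<inter> B" using Bey_anti[of N "max N M"] Bey_anti[of M "max N M"] by auto
    then show ?thesis by blast
  qed
qed

lemma Bey_in: "F0 \<subseteq> u \<Longrightarrow> Bey N \<in> u"
  unfolding F0_def by blast

lemma star_F0: assumes u: "ultra u" and v: "ultra v" and "F0 \<subseteq> u" "F0 \<subseteq> v"
  shows "F0 \<subseteq> star u v"
proof
  fix A assume "A \<in> F0"
  then obtain N where N: "Bey N \<subseteq> A" unfolding F0_def by blast
  have "Bey N \<subseteq> tlf v A"
  proof
    fix K assume K: "K \<in> Bey N"
    have "Bey N \<subseteq> {L. K \<union> L \<in> A}"
    proof
      fix L assume "L \<in> Bey N"
      then have "K \<union> L \<in> Bey N" using K unfolding Bey_def by auto
      then show "L \<in> {L. K \<union> L \<in> A}" using N by blast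
    qed
    then show "K \<in> tlf v A" unfolding tlf_def
      using filt_mono[OF ultra_filt[OF v] Bey_in[OF assms(4)]] by blast
  qed
  then show "A \<in> star u v" unfolding star_def
    using filt_mono[OF ultra_filt[OF u] Bey_in[OF assms(3)]] by blast
qed



definition ZZ :: "nat set set set set" where
  "ZZ = {F. filt F \<and> F0 \<subseteq> F \<and> (\<forall>u v. ultra u \<longrightarrow> ultra v \<longrightarrow> F \<subseteq> u \<longrightarrow> F \<subseteq> v \<longrightarrow> F \<subseteq> star u v)}"

lemma F0_ZZ: "F0 \<in> ZZ"
  unfolding ZZ_def using filt_F0 star_F0 by blast

lemma ZZ_chain: "\<forall>C\<in>chains ZZ. \<exists>U\<in>ZZ. \<forall>X\<in>C. X \<subseteq> U"
proof
  fix C assume C: "C \<in> chains ZZ"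
  then have CZ: "C \<subseteq> ZZ" and ch: "chain\<^sub>\<subseteq> C" unfolding chains_def by auto
  show "\<exists>U\<in>ZZ. \<forall>X\<in>C. X \<subseteq> U"
  proof (cases "C = {}")
    case True then show ?thesis using F0_ZZ by blast
  next
    case False
    have "\<forall>G\<in>C. filt G" using CZ unfolding ZZ_def by auto
    then have f: "filt (\<Union>C)" using filt_chain_Union[OF False _ ch] by simp
    have "F0 \<subseteq> \<Union>C" using False CZ unfolding ZZ_def by auto
    moreover have "\<Union>C \<subseteq> star u v" if "ultra u" "ultra v" "\<Union>C \<subseteq> u" "\<Union>C \<subseteq> v" for u v
    proof
      fix A assume "A \<in> \<Union>C"
      then obtain G where G: "G \<in> C" "A \<in> G" by blast
      then have "G \<subseteq> u" "G \<subseteq> v" using that by auto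
      then have "G \<subseteq> star u v" using G CZ that unfolding ZZ_def by blast
      then show "A \<in> star u v" using G by blast
    qed
    ultimately have "\<Union>C \<in> ZZ" using f unfolding ZZ_def by blast
    then show ?thesis by (intro bexI[of _ "\<Union>C"]) auto
  qed
qed

lemma idem_exists: "\<exists>e. ultra e \<and> F0 \<subseteq> e \<and> star e e = e"
proof -
  from Zorn_Lemma2[OF ZZ_chain] obtain F where FZ: "F \<in> ZZ"
    and max: "\<And>X. X \<in> ZZ \<Longrightarrow> F \<subseteq> X \<Longrightarrow> X = F" by blast
  have fF: "filt F" and F0F: "F0 \<subseteq> F"
    and semF: "\<And>u v. ultra u \<Longrightarrow> ultra v \<Longrightarrow> F \<subseteq> u \<Longrightarrow> F \<subseteq> v \<Longrightarrow> F \<subseteq> star u v"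
    using FZ unfolding ZZ_def by auto
  obtain e where e: "ultra e" "F \<subseteq> e" using ultra_ext[OF fF] by blast
  have fe: "filt e" using e ultra_filt by auto
  define F1 where "F1 = {A. \<forall>u. ultra u \<and> F \<subseteq> u \<longrightarrow> A \<in> star u e}"
  have FF1: "F \<subseteq> F1" unfolding F1_def using semF e by blast
  have fF1: "filt F1" unfolding filt_def
  proof (intro conjI allI impI)
    show "UNIV \<in> F1" using FF1 filt_UNIV[OF fF] by blast
    have "{} \<notin> star e e" using filt_empty[OF ultra_filt[OF star_ultra[OF e(1) e(1)]]] .
    then show "{} \<notin> F1" unfolding F1_def using e by blast
    show "B \<in> F1" if h: "A \<in> F1" "A \<subseteq> B" for A B
      using h filt_mono[OF ultra_filt[OF star_ultra[OF _ e(1)]]] unfolding F1_def by blast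
    show "A \<inter> B \<in> F1" if h: "A \<in> F1" "B \<in> F1" for A B
      using h filt_Int[OF ultra_filt[OF star_ultra[OF _ e(1)]]] unfolding F1_def by blast
  qed
  have closed1: "\<exists>u. ultra u \<and> F \<subseteq> u \<and> star u e = w" if w: "ultra w" "F1 \<subseteq> w" for w
  proof -
    define G where "G = {B. \<exists>C\<in>F. \<exists>A\<in>w. C \<inter> tlf e A \<subseteq> B}"
    have fw: "filt w" using w ultra_filt by auto
    have "filt G" unfolding filt_def
    proof (intro conjI allI impI)
      have "UNIV \<inter> tlf e UNIV \<subseteq> UNIV" by simp
      then show "UNIV \<in> G" unfolding G_def using filt_UNIV[OF fF] filt_UNIV[OF fw] by blast
      show "{} \<notin> G"
      proof
        assume "{} \<in> G"
        then obtain C A where CA: "C \<in> F" "A \<in> w" "C \<inter> tlf e A \<subseteq> {}" unfolding G_def by blast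
        have "-A \<in> F1" unfolding F1_def
        proof (intro CollectI allI impI)
          fix u assume u: "ultra u \<and> F \<subseteq> u"
          have "tlf e A \<notin> u"
          proof
            assume "tlf e A \<in> u"
            moreover have "C \<in> u" using u CA by blast
            ultimately have "C \<inter> tlf e A \<in> u" using filt_Int[OF ultra_filt] u by blast
            then have "{} \<in> u" using CA(3) by simp
            then show False using u filt_empty[OF ultra_filt] by blast
          qed
          then have "- tlf e A \<in> u" using u ultra_compl by blast
          then show "-A \<in> star u e" unfolding star_def using tlf_compl[OF e(1)] by simp
        qed
        then have "-A \<in> w" using w by blast
        then show False using CA(2) ultra_not_both[OF w(1)] by blast
      qed
      show "B' \<in> G" if h: "B \<in> G" "B \<subseteq> B'" for B B'
      proof -
        obtain C A where "C \<in> F" "A \<in> w" "C \<inter> tlf e A \<subseteq> B" using h(1) unfolding G_def by blast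
        moreover have "C \<inter> tlf e A \<subseteq> B'" using \<open>C \<inter> tlf e A \<subseteq> B\<close> h(2) by (rule subset_trans)
        ultimately show ?thesis unfolding G_def by blast
      qed
      show "B \<inter> B' \<in> G" if h: "B \<in> G" "B' \<in> G" for B B'
      proof -
        obtain C A where 1: "C \<in> F" "A \<in> w" "C \<inter> tlf e A \<subseteq> B" using h(1) unfolding G_def by blast
        obtain C' A' where 2: "C' \<in> F" "A' \<in> w" "C' \<inter> tlf e A' \<subseteq> B'" using h(2) unfolding G_def by blast
        have "(C \<inter> C') \<inter> tlf e (A \<inter> A') \<subseteq> B \<inter> B'" using 1 2 tlf_Int[OF fe, of A A'] by blast
        moreover have "C \<inter> C' \<in> F" using filt_Int[OF fF 1(1) 2(1)] .
        moreover have "A \<inter> A' \<in> w" using filt_Int[OF fw 1(2) 2(2)] .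
        ultimately show ?thesis unfolding G_def by blast
      qed
    qed
    then obtain u where u: "ultra u" "G \<subseteq> u" using ultra_ext by blast
    have "F \<subseteq> G"
    proof
      fix C assume "C \<in> F"
      moreover have "C \<inter> tlf e UNIV \<subseteq> C" by simp
      ultimately show "C \<in> G" unfolding G_def using filt_UNIV[OF fw] by blast
    qed
    have "w \<subseteq> star u e"
    proof
      fix A assume "A \<in> w"
      moreover have "UNIV \<inter> tlf e A \<subseteq> tlf e A" by simp
      ultimately have "tlf e A \<in> G" unfolding G_def using filt_UNIV[OF fF] by blast
      then show "A \<in> star u e" using u unfolding star_def by blast
    qed
    then have "w = star u e" using ultra_subset_eq[OF w(1) star_ultra[OF u(1) e(1)]] by simp
    then show ?thesis using u \<open>F \<subseteq> G\<close> by blast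
  qed
  have "F1 \<in> ZZ" unfolding ZZ_def
  proof (intro CollectI conjI allI impI)
    show "filt F1" by (fact fF1)
    show "F0 \<subseteq> F1" using F0F FF1 by blast
    fix w1 w2 assume w: "ultra w1" "ultra w2" "F1 \<subseteq> w1" "F1 \<subseteq> w2"
    obtain u1 where u1: "ultra u1" "F \<subseteq> u1" "star u1 e = w1" using closed1 w by blast
    obtain u2 where u2: "ultra u2" "F \<subseteq> u2" "star u2 e = w2" using closed1 w by blast
    have "star w1 w2 = star (star w1 u2) e" using u1 u2 star_assoc by metis
    moreover have "ultra (star w1 u2)" using star_ultra w u2 by blast
    moreover have "F \<subseteq> star w1 u2" using semF[of w1 u2] w u2 FF1 by blast
    ultimately show "F1 \<subseteq> star w1 w2" unfolding F1_def by auto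
  qed
  then have "F1 = F" using max FF1 by blast
  then obtain u0 where u0: "ultra u0" "F \<subseteq> u0" "star u0 e = e" using closed1 e by blast
  define F2 where "F2 = {A. \<forall>u. ultra u \<and> F \<subseteq> u \<and> star u e = e \<longrightarrow> A \<in> u}"
  have FF2: "F \<subseteq> F2" unfolding F2_def by blast
  have fF2: "filt F2" unfolding filt_def
  proof (intro conjI allI impI)
    show "UNIV \<in> F2" using FF2 filt_UNIV[OF fF] by blast
    have "{} \<notin> u0" using filt_empty[OF ultra_filt[OF u0(1)]] .
    then show "{} \<notin> F2" unfolding F2_def using u0 by blast
    show "B \<in> F2" if h: "A \<in> F2" "A \<subseteq> B" for A B
      using h filt_mono[OF ultra_filt] unfolding F2_def by blast
    show "A \<inter> B \<in> F2" if h: "A \<in> F2" "B \<in> F2" for A B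
      using h filt_Int[OF ultra_filt] unfolding F2_def by blast
  qed
  have closed2: "star w e = e" if w: "ultra w" "F2 \<subseteq> w" for w
  proof -
    have "e \<subseteq> star w e"
    proof
      fix A assume A: "A \<in> e"
      have "tlf e A \<in> F2" unfolding F2_def
      proof (intro CollectI allI impI)
        fix u assume "ultra u \<and> F \<subseteq> u \<and> star u e = e"
        then have "A \<in> star u e" using A by simp
        then show "tlf e A \<in> u" unfolding star_def by simp
      qed
      then show "A \<in> star w e" using w unfolding star_def by blast
    qed
    then show ?thesis using ultra_subset_eq[OF e(1) star_ultra[OF w(1) e(1)]] by simp
  qed
  have "F2 \<in> ZZ" unfolding ZZ_def
  proof (intro CollectI conjI allI impI)
    show "filt F2" by (fact fF2)
    show "F0 \<subseteq> F2" using F0F FF2 by blast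
    fix w1 w2 assume w: "ultra w1" "ultra w2" "F2 \<subseteq> w1" "F2 \<subseteq> w2"
    have "star (star w1 w2) e = e" using closed2 w star_assoc by metis
    moreover have "F \<subseteq> star w1 w2" using semF w FF2 by blast
    moreover have "ultra (star w1 w2)" using star_ultra w by blast
    ultimately show "F2 \<subseteq> star w1 w2" unfolding F2_def by blast
  qed
  then have "F2 = F" using max FF2 by blast
  then have "star e e = e" using closed2 e by blast
  then show ?thesis using e F0F by blast
qed



definition lsum :: "'a::semigroup_add list \<Rightarrow> 'a" where
  "lsum xs = fold (\<lambda>x acc. acc + x) (tl xs) (hd xs)"

lemma fold_add_left: "fold (\<lambda>x acc. acc + x) zs (s + t) = s + fold (\<lambda>x acc. acc + x) zs (t::'a::semigroup_add)"
  by (induction zs arbitrary: t) (simp_all add: add.assoc)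

lemma lsum_append: "xs \<noteq> [] \<Longrightarrow> ys \<noteq> [] \<Longrightarrow> lsum (xs @ ys) = lsum xs + lsum (ys::'a::semigroup_add list)"
proof -
  assume "xs \<noteq> []" "ys \<noteq> []"
  then obtain y ys' where ys: "ys = y # ys'" by (cases ys) auto
  have "lsum (xs @ ys) = fold (\<lambda>x acc. acc + x) ys (lsum xs)"
    using \<open>xs \<noteq> []\<close> unfolding lsum_def by (cases xs) auto
  also have "\<dots> = lsum xs + lsum ys" unfolding ys lsum_def by (simp add: fold_add_left)
  finally show ?thesis .
qed

lemma fsum_lsum: "fsum a F = lsum (map a (sorted_list_of_set F))"
  unfolding fsum_def lsum_def Let_def by simp

lemma fsum_single[simp]: "fsum a {k} = a k"
  unfolding fsum_def by simp

lemma sorted_list_Un: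
  assumes "finite K" "finite L" "set_less K L"
  shows "sorted_list_of_set (K \<union> L) = sorted_list_of_set K @ sorted_list_of_set L"
proof (rule sorted_distinct_set_unique)
  show "sorted (sorted_list_of_set K @ sorted_list_of_set L)"
    using assms unfolding set_less_def by (auto simp: sorted_append less_imp_le)
  show "distinct (sorted_list_of_set K @ sorted_list_of_set L)"
    using assms unfolding set_less_def by auto
qed (use assms in auto)

lemma fsum_Un:
  assumes "finite K" "finite L" "K \<noteq> {}" "L \<noteq> {}" "set_less K L"
  shows "fsum a (K \<union> L) = fsum a K + fsum a L"
  unfolding fsum_lsum sorted_list_Un[OF assms(1,2,5)]
  using assms by (simp add: lsum_append)

lemma fsum_cong: "finite F \<Longrightarrow> (\<And>i. i \<in> F \<Longrightarrow> a i = a' i) \<Longrightarrow> fsum a F = fsum a' F"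
  unfolding fsum_lsum by (metis list.map_cong0 set_sorted_list_of_set)



definition ev :: "nat set set set \<Rightarrow> (nat set \<Rightarrow> bool) \<Rightarrow> bool" where
  "ev e P \<longleftrightarrow> {K. P K} \<in> e"

definition opp :: "'a::semigroup_add option \<Rightarrow> 'a \<Rightarrow> 'a" where
  "opp z s = (case z of None \<Rightarrow> s | Some x \<Rightarrow> x + s)"

lemma opp_assoc: "opp (Some (opp z s)) t = opp z (s + t)"
  unfolding opp_def by (cases z) (simp_all add: add.assoc)

locale idem =
  fixes e :: "nat set set set" and a :: "nat \<Rightarrow> 'a::semigroup_add"
  assumes ue: "ultra e" and F0e: "F0 \<subseteq> e" and ide: "star e e = e" and pa: "proper_seq a"
begin

definition Pr :: "'a option \<Rightarrow> 'a \<Rightarrow> bool" where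
  "Pr z c \<longleftrightarrow> ev e (\<lambda>K. opp z (fsum a K) = c)"

lemma fe: "filt e" using ue ultra_filt by auto

lemma ev_conj: "ev e P \<Longrightarrow> ev e Q \<Longrightarrow> ev e (\<lambda>K. P K \<and> Q K)"
  unfolding ev_def using filt_Int[OF fe, of "{K. P K}" "{K. Q K}"] by (simp add: Collect_conj_eq)

lemma ev_mono: "ev e P \<Longrightarrow> (\<And>K. P K \<Longrightarrow> Q K) \<Longrightarrow> ev e Q"
  unfolding ev_def using filt_mono[OF fe, of "{K. P K}" "{K. Q K}"] by blast

lemma ev_ex: "ev e P \<Longrightarrow> \<exists>K. P K"
  unfolding ev_def using filt_empty[OF fe] by (metis Collect_empty_eq)

lemma ev_neg: "\<not> ev e P \<Longrightarrow> ev e (\<lambda>K. \<not> P K)"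
  unfolding ev_def using ultra_compl[OF ue, of "{K. P K}"] by (simp add: Collect_neg_eq)

lemma ev_True: "ev e (\<lambda>K. True)"
  unfolding ev_def using filt_UNIV[OF fe] by simp

lemma ev_Bey: "ev e (\<lambda>K. K \<in> Bey N)"
  unfolding ev_def using Bey_in[OF F0e] by simp

lemma ev_idem: "ev e (\<lambda>K. ev e (\<lambda>L. P (K \<union> L))) \<Longrightarrow> ev e P"
proof -
  assume h: "ev e (\<lambda>K. ev e (\<lambda>L. P (K \<union> L)))"
  have "tlf e {K. P K} = {K. ev e (\<lambda>L. P (K \<union> L))}" unfolding tlf_def ev_def by simp
  then have "{K. P K} \<in> star e e" using h unfolding star_def ev_def by simp
  then show ?thesis using ide unfolding ev_def by simp
qed

lemma ev_ball: "finite S \<Longrightarrow> (\<forall>x\<in>S. ev e (P x)) \<Longrightarrow> ev e (\<lambda>K. \<forall>x\<in>S. P x K)"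
proof (induction S rule: finite_induct)
  case empty then show ?case using ev_True by simp
next
  case (insert x F)
  then have "ev e (\<lambda>K. P x K \<and> (\<forall>y\<in>F. P y K))" using ev_conj by simp
  then show ?case by simp
qed

lemma Pr_unique: "Pr z c \<Longrightarrow> Pr z c' \<Longrightarrow> c = c'"
proof -
  assume h: "Pr z c" "Pr z c'"
  obtain K where "opp z (fsum a K) = c \<and> opp z (fsum a K) = c'"
    using ev_ex[OF ev_conj[OF h(1)[unfolded Pr_def] h(2)[unfolded Pr_def]]] by blast
  then show ?thesis by (metis (no_types))
qed

lemma Bey_set_less: assumes "finite K" "L \<in> Bey (Max K)" shows "set_less K L"
  unfolding set_less_def
proof (intro ballI)
  fix x y assume "x \<in> K" "y \<in> L"
  then have "x \<le> Max K" using Max_ge assms(1) by blast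
  moreover have "Max K < y" using assms(2) \<open>y \<in> L\<close> unfolding Bey_def by blast
  ultimately show "x < y" by simp
qed

lemma L0: "\<not> Pr None c"
proof
  assume "Pr None c"
  then have h: "ev e (\<lambda>K. fsum a K = c)" unfolding Pr_def opp_def by simp
  obtain K1 where K1: "fsum a K1 = c" "K1 \<in> Bey 0" using ev_ex[OF ev_conj[OF h ev_Bey]] by blast
  obtain K2 where K2: "fsum a K2 = c" "K2 \<in> Bey (Max K1)" using ev_ex[OF ev_conj[OF h ev_Bey]] by blast
  have "set_less K1 K2" using K1 K2 Bey_set_less unfolding Bey_def by blast
  moreover have "finite K1" "K1 \<noteq> {}" "finite K2" "K2 \<noteq> {}" using K1 K2 unfolding Bey_def by auto
  ultimately have "fsum a K1 \<noteq> fsum a K2" using pa unfolding proper_seq_def by blast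
  then show False using K1 K2 by simp
qed

lemma L1: assumes "\<not> Pr z w" shows "ev e (\<lambda>K. \<not> Pr (Some (opp z (fsum a K))) w)"
proof (rule ccontr)
  assume "\<not> ?thesis"
  then have "ev e (\<lambda>K. \<not>\<not> Pr (Some (opp z (fsum a K))) w)" by (rule ev_neg)
  then have h: "ev e (\<lambda>K. ev e (\<lambda>L. opp z (fsum a K + fsum a L) = w))"
    unfolding Pr_def by (simp add: opp_assoc)
  have "ev e (\<lambda>K. ev e (\<lambda>L. opp z (fsum a (K \<union> L)) = w))"
  proof (rule ev_mono[OF ev_conj[OF h ev_Bey[of 0]]])
    fix K assume K: "ev e (\<lambda>L. opp z (fsum a K + fsum a L) = w) \<and> K \<in> Bey 0"
    then have Kf: "finite K" "K \<noteq> {}" unfolding Bey_def by auto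
    show "ev e (\<lambda>L. opp z (fsum a (K \<union> L)) = w)"
    proof (rule ev_mono[OF ev_conj[OF conjunct1[OF K] ev_Bey[of "Max K"]]])
      fix L assume L: "opp z (fsum a K + fsum a L) = w \<and> L \<in> Bey (Max K)"
      then have "set_less K L" using Bey_set_less Kf by blast
      have "finite L" "L \<noteq> {}" using L unfolding Bey_def by auto
      then have "fsum a (K \<union> L) = fsum a K + fsum a L" using fsum_Un Kf \<open>set_less K L\<close> by blast
      then show "opp z (fsum a (K \<union> L)) = w" using L by simp
    qed
  qed
  then have "Pr z w" unfolding Pr_def by (rule ev_idem)
  then show False using assms by simp
qed

lemma L2: assumes B: "\<forall>c. \<not> (Pr z c \<and> Pr w c)" shows "ev e (\<lambda>K. \<not> Pr z (opp w (fsum a K)))"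
proof (rule ccontr)
  assume "\<not> ?thesis"
  then have h: "ev e (\<lambda>K. Pr z (opp w (fsum a K)))" using ev_neg by fastforce
  obtain K0 where K0: "Pr z (opp w (fsum a K0))" using ev_ex[OF h] by blast
  define c where "c = opp w (fsum a K0)"
  have "ev e (\<lambda>K. opp w (fsum a K) = c)"
  proof (rule ev_mono[OF h])
    fix K assume "Pr z (opp w (fsum a K))"
    then show "opp w (fsum a K) = c" using Pr_unique K0 unfolding c_def by blast
  qed
  then have "Pr w c" unfolding Pr_def .
  then show False using B K0 unfolding c_def by blast
qed

lemma L3: assumes B: "\<forall>c. \<not> (Pr z c \<and> Pr w c)"
  shows "ev e (\<lambda>K. \<forall>c. \<not> (Pr (Some (opp z (fsum a K))) c \<and> Pr w c))"
proof (cases "\<exists>c. Pr w c")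
  case False
  show ?thesis
  proof (rule ev_mono[OF ev_True])
    fix K show "\<forall>c. \<not> (Pr (Some (opp z (fsum a K))) c \<and> Pr w c)" using False by blast
  qed
next
  case True
  then obtain c0 where c0: "Pr w c0" by blast
  then have "\<not> Pr z c0" using B by blast
  from L1[OF this] show ?thesis
  proof (rule ev_mono)
    fix K assume K: "\<not> Pr (Some (opp z (fsum a K))) c0"
    show "\<forall>c. \<not> (Pr (Some (opp z (fsum a K))) c \<and> Pr w c)"
    proof (intro allI notI)
      fix c assume "Pr (Some (opp z (fsum a K))) c \<and> Pr w c"
      then have "c = c0" using c0 Pr_unique by blast
      then show False using K \<open>Pr (Some (opp z (fsum a K))) c \<and> Pr w c\<close> by simp
    qed
  qed
qed

lemma L_final: "\<not> Pr z w \<Longrightarrow> ev e (\<lambda>K. opp z (fsum a K) \<noteq> w)"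
  unfolding Pr_def by (rule ev_neg)

end



context idem begin

definition bb :: "(nat \<Rightarrow> nat set) \<Rightarrow> nat \<Rightarrow> 'a" where
  "bb Ks i = fsum a (Ks i)"

definition zz :: "(nat \<Rightarrow> nat set) \<Rightarrow> nat set \<Rightarrow> 'a option" where
  "zz Ks F = (if F = {} then None else Some (fsum (bb Ks) F))"

definition Inv :: "nat \<Rightarrow> (nat \<Rightarrow> nat set) \<Rightarrow> bool" where
  "Inv n Ks \<longleftrightarrow>
    (\<forall>F G. F \<subseteq> {..<n} \<longrightarrow> G \<subseteq> {..<n} \<longrightarrow> F \<inter> G = {} \<longrightarrow> G \<noteq> {} \<longrightarrow>
        \<not> Pr (zz Ks F) (fsum (bb Ks) G)) \<and>
    (\<forall>F G. F \<subseteq> {..<n} \<longrightarrow> G \<subseteq> {..<n} \<longrightarrow> F \<inter> G = {} \<longrightarrow>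
        (\<forall>c. \<not> (Pr (zz Ks F) c \<and> Pr (zz Ks G) c)))"

definition Cond :: "(nat \<Rightarrow> nat set) \<Rightarrow> nat set \<Rightarrow> nat set \<Rightarrow> nat set \<Rightarrow> bool" where
  "Cond Ks F G K \<longleftrightarrow>
     (G \<noteq> {} \<longrightarrow> opp (zz Ks F) (fsum a K) \<noteq> fsum (bb Ks) G \<and>
                 \<not> Pr (Some (opp (zz Ks F) (fsum a K))) (fsum (bb Ks) G)) \<and>
     \<not> Pr (zz Ks F) (opp (zz Ks G) (fsum a K)) \<and>
     (\<forall>c. \<not> (Pr (Some (opp (zz Ks F) (fsum a K))) c \<and> Pr (zz Ks G) c))"

lemma Inv0: "Inv 0 Ks"
  unfolding Inv_def zz_def using L0 by auto

lemma ev_Cond: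
  assumes I: "Inv n Ks" and F: "F \<subseteq> {..<n}" and G: "G \<subseteq> {..<n}" and FG: "F \<inter> G = {}"
  shows "ev e (Cond Ks F G)"
proof -
  have B: "\<forall>c. \<not> (Pr (zz Ks F) c \<and> Pr (zz Ks G) c)" using I F G FG unfolding Inv_def by blast
  have e1: "ev e (\<lambda>K. G \<noteq> {} \<longrightarrow> opp (zz Ks F) (fsum a K) \<noteq> fsum (bb Ks) G \<and>
                 \<not> Pr (Some (opp (zz Ks F) (fsum a K))) (fsum (bb Ks) G))"
  proof (cases "G = {}")
    case True
    show ?thesis by (rule ev_mono[OF ev_True]) (simp add: True)
  next
    case False
    then have A: "\<not> Pr (zz Ks F) (fsum (bb Ks) G)" using I F G FG unfolding Inv_def by blast
    show ?thesis by (rule ev_mono[OF ev_conj[OF L_final[OF A] L1[OF A]]]) simp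
  qed
  have e2: "ev e (\<lambda>K. \<not> Pr (zz Ks F) (opp (zz Ks G) (fsum a K)))" using L2[OF B] .
  have e3: "ev e (\<lambda>K. \<forall>c. \<not> (Pr (Some (opp (zz Ks F) (fsum a K))) c \<and> Pr (zz Ks G) c))"
    using L3[OF B] .
  show ?thesis unfolding Cond_def[abs_def] using ev_conj[OF e1 ev_conj[OF e2 e3]] .
qed

lemma ev_all_Cond:
  assumes I: "Inv n Ks"
  shows "ev e (\<lambda>K. \<forall>p\<in>{p. fst p \<subseteq> {..<n} \<and> snd p \<subseteq> {..<n} \<and> fst p \<inter> snd p = {}}.
                    Cond Ks (fst p) (snd p) K)"
proof (rule ev_ball)
  have "{p. fst p \<subseteq> {..<n} \<and> snd p \<subseteq> {..<n} \<and> fst p \<inter> snd p = {}} \<subseteq> Pow {..<n} \<times> Pow {..<n}"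
    by auto
  then show "finite {p. fst p \<subseteq> {..<n} \<and> snd p \<subseteq> {..<n} \<and> fst p \<inter> snd p = {}}"
    by (rule finite_subset) simp
  show "\<forall>p\<in>{p. fst p \<subseteq> {..<n} \<and> snd p \<subseteq> {..<n} \<and> fst p \<inter> snd p = {}}. ev e (Cond Ks (fst p) (snd p))"
    using ev_Cond[OF I] by blast
qed

lemma split_sub:
  assumes "F \<subseteq> {..<Suc n}"
  obtains "n \<notin> F" "F \<subseteq> {..<n}"
        | "n \<in> F" "F - {n} \<subseteq> {..<n}" "F = insert n (F - {n})"
proof (cases "n \<in> F")
  case True
  have "F - {n} \<subseteq> {..<n}" using assms by (auto simp: less_Suc_eq)
  moreover have "F = insert n (F - {n})" using True by blast
  ultimately show ?thesis using that(2) True by blast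
next
  case False
  have "F \<subseteq> {..<n}" using assms False by (auto simp: less_Suc_eq)
  then show ?thesis using that(1) False by blast
qed

lemma fsum_upd:
  assumes "F \<subseteq> {..<n}"
  shows "fsum (bb (Ks(n := K))) F = fsum (bb Ks) F"
proof (rule fsum_cong)
  show "finite F" using assms finite_subset by blast
  show "bb (Ks(n := K)) i = bb Ks i" if "i \<in> F" for i using that assms unfolding bb_def by auto
qed

lemma zz_upd: "F \<subseteq> {..<n} \<Longrightarrow> zz (Ks(n := K)) F = zz Ks F"
  unfolding zz_def using fsum_upd by simp

lemma fsum_ins:
  assumes F: "F \<subseteq> {..<n}" and K: "K \<in> Bey N"
  shows "fsum (bb (Ks(n := K))) (insert n F) = opp (zz Ks F) (fsum a K)"
proof (cases "F = {}")
  case True then show ?thesis unfolding zz_def opp_def bb_def by simp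
next
  case False
  have fin: "finite F" using F finite_subset by blast
  have sl: "set_less F {n}" using F unfolding set_less_def by auto
  have "insert n F = F \<union> {n}" by auto
  then have "fsum (bb (Ks(n := K))) (insert n F) = fsum (bb (Ks(n := K))) F + bb (Ks(n := K)) n"
    using fsum_Un[OF fin _ False _ sl] by simp
  also have "\<dots> = fsum (bb Ks) F + fsum a K" using fsum_upd[OF F] unfolding bb_def by simp
  finally show ?thesis using False unfolding zz_def opp_def by simp
qed

lemma zz_ins:
  assumes F: "F \<subseteq> {..<n}" and K: "K \<in> Bey N"
  shows "zz (Ks(n := K)) (insert n F) = Some (opp (zz Ks F) (fsum a K))"
  using fsum_ins[OF assms] unfolding zz_def by simp

lemma fsum_ins':
  assumes "n \<in> G" "G - {n} \<subseteq> {..<n}" "K \<in> Bey N"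
  shows "fsum (bb (Ks(n := K))) G = opp (zz Ks (G - {n})) (fsum a K)"
proof -
  have eq: "G = insert n (G - {n})" using assms(1) by blast
  show ?thesis by (subst (1) eq) (rule fsum_ins[OF assms(2,3)])
qed

lemma zz_ins':
  assumes "n \<in> G" "G - {n} \<subseteq> {..<n}" "K \<in> Bey N"
  shows "zz (Ks(n := K)) G = Some (opp (zz Ks (G - {n})) (fsum a K))"
proof -
  have eq: "G = insert n (G - {n})" using assms(1) by blast
  show ?thesis by (subst (1) eq) (rule zz_ins[OF assms(2,3)])
qed

lemma InvA: "Inv n Ks \<Longrightarrow> F \<subseteq> {..<n} \<Longrightarrow> G \<subseteq> {..<n} \<Longrightarrow> F \<inter> G = {} \<Longrightarrow> G \<noteq> {} \<Longrightarrow>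
        \<not> Pr (zz Ks F) (fsum (bb Ks) G)"
  unfolding Inv_def by blast

lemma InvB: "Inv n Ks \<Longrightarrow> F \<subseteq> {..<n} \<Longrightarrow> G \<subseteq> {..<n} \<Longrightarrow> F \<inter> G = {} \<Longrightarrow>
        \<not> (Pr (zz Ks F) c \<and> Pr (zz Ks G) c)"
  unfolding Inv_def by blast

lemma Inv_step:
  assumes I: "Inv n Ks" and K: "K \<in> Bey N"
    and C: "\<And>F G. F \<subseteq> {..<n} \<Longrightarrow> G \<subseteq> {..<n} \<Longrightarrow> F \<inter> G = {} \<Longrightarrow> Cond Ks F G K"
  shows "Inv (Suc n) (Ks(n := K))"
  unfolding Inv_def
proof (intro conjI allI impI)
  fix F' G' assume F': "F' \<subseteq> {..<Suc n}" and G': "G' \<subseteq> {..<Suc n}" and FG: "F' \<inter> G' = {}"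
  {
    assume Gne: "G' \<noteq> {}"
    show "\<not> Pr (zz (Ks(n := K)) F') (fsum (bb (Ks(n := K))) G')"
    proof (cases rule: split_sub[OF F'])
      case 1
      note F'n = \<open>F' \<subseteq> {..<n}\<close>
      show ?thesis
      proof (cases rule: split_sub[OF G'])
        case 1
        have "\<not> Pr (zz Ks F') (fsum (bb Ks) G')" by (rule InvA[OF I F'n 1(2) FG Gne])
        then show ?thesis by (simp add: zz_upd[OF F'n] fsum_upd[OF 1(2)])
      next
        case 2
        have "Cond Ks F' (G' - {n}) K" using C[OF F'n 2(2)] FG by blast
        then have "\<not> Pr (zz Ks F') (opp (zz Ks (G' - {n})) (fsum a K))" unfolding Cond_def by blast
        then show ?thesis by (simp add: zz_upd[OF F'n] fsum_ins'[OF 2(1,2) K])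
      qed
    next
      case 2
      then have "n \<notin> G'" using FG by blast
      then have G'n: "G' \<subseteq> {..<n}" using G' by (auto simp: less_Suc_eq)
      have "Cond Ks (F' - {n}) G' K" using C[OF 2(2) G'n] FG by blast
      then have "\<not> Pr (Some (opp (zz Ks (F' - {n})) (fsum a K))) (fsum (bb Ks) G')"
        unfolding Cond_def using Gne by blast
      then show ?thesis by (simp add: zz_ins'[OF 2(1,2) K] fsum_upd[OF G'n])
    qed
  }
  fix c
  show "\<not> (Pr (zz (Ks(n := K)) F') c \<and> Pr (zz (Ks(n := K)) G') c)"
  proof (cases rule: split_sub[OF F'])
    case 1
    note F'n = \<open>F' \<subseteq> {..<n}\<close>
    show ?thesis
    proof (cases rule: split_sub[OF G'])
      case 1
      have "\<forall>c. \<not> (Pr (zz Ks F') c \<and> Pr (zz Ks G') c)" using InvB[OF I F'n 1(2) FG] by blast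
      then show ?thesis by (simp add: zz_upd[OF F'n] zz_upd[OF 1(2)])
    next
      case 2
      have "Cond Ks (G' - {n}) F' K" using C[OF 2(2) F'n] FG by blast
      then have "\<forall>c. \<not> (Pr (Some (opp (zz Ks (G' - {n})) (fsum a K))) c \<and> Pr (zz Ks F') c)"
        unfolding Cond_def by blast
      then show ?thesis by (auto simp add: zz_upd[OF F'n] zz_ins'[OF 2(1,2) K])
    qed
  next
    case 2
    then have "n \<notin> G'" using FG by blast
    then have G'n: "G' \<subseteq> {..<n}" using G' by (auto simp: less_Suc_eq)
    have "Cond Ks (F' - {n}) G' K" using C[OF 2(2) G'n] FG by blast
    then have "\<forall>c. \<not> (Pr (Some (opp (zz Ks (F' - {n})) (fsum a K))) c \<and> Pr (zz Ks G') c)"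
      unfolding Cond_def by blast
    then show ?thesis by (simp add: zz_ins'[OF 2(1,2) K] zz_upd[OF G'n])
  qed
qed

end



context idem begin

definition Nx :: "(nat \<Rightarrow> nat set) \<Rightarrow> nat \<Rightarrow> nat" where
  "Nx Ks n = (if n = 0 then 0 else Max (Ks (n - 1)))"

definition PP :: "nat \<Rightarrow> (nat \<Rightarrow> nat set) \<Rightarrow> bool" where
  "PP n Ks \<longleftrightarrow> Inv n Ks \<and> (\<forall>i<n. Ks i \<noteq> {} \<and> finite (Ks i))"

definition QQ :: "nat \<Rightarrow> (nat \<Rightarrow> nat set) \<Rightarrow> (nat \<Rightarrow> nat set) \<Rightarrow> bool" where
  "QQ n Ks Ks' \<longleftrightarrow> Ks' = Ks(n := Ks' n) \<and> Ks' n \<in> Bey (Nx Ks n) \<and>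
     (\<forall>F G. F \<subseteq> {..<n} \<longrightarrow> G \<subseteq> {..<n} \<longrightarrow> F \<inter> G = {} \<longrightarrow> G \<noteq> {} \<longrightarrow>
        opp (zz Ks F) (fsum a (Ks' n)) \<noteq> fsum (bb Ks) G)"

lemma PP_step: assumes "PP n Ks" shows "\<exists>Ks'. PP (Suc n) Ks' \<and> QQ n Ks Ks'"
proof -
  have I: "Inv n Ks" using assms unfolding PP_def by blast
  obtain K where K: "\<forall>p\<in>{p. fst p \<subseteq> {..<n} \<and> snd p \<subseteq> {..<n} \<and> fst p \<inter> snd p = {}}.
                    Cond Ks (fst p) (snd p) K" and KB: "K \<in> Bey (Nx Ks n)"
    using ev_ex[OF ev_conj[OF ev_all_Cond[OF I] ev_Bey[of "Nx Ks n"]]] by blast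
  have C: "Cond Ks F G K" if "F \<subseteq> {..<n}" "G \<subseteq> {..<n}" "F \<inter> G = {}" for F G
    using K that by auto
  have "Inv (Suc n) (Ks(n := K))" using Inv_step[OF I KB C] by blast
  moreover have "\<forall>i<Suc n. (Ks(n := K)) i \<noteq> {} \<and> finite ((Ks(n := K)) i)"
    using assms KB unfolding PP_def Bey_def by (auto simp: less_Suc_eq)
  moreover have "QQ n Ks (Ks(n := K))" unfolding QQ_def
  proof (intro conjI allI impI)
    show "Ks(n := K) = Ks(n := (Ks(n := K)) n)" by simp
    show "(Ks(n := K)) n \<in> Bey (Nx Ks n)" using KB by simp
    fix F G assume "F \<subseteq> {..<n}" "G \<subseteq> {..<n}" "F \<inter> G = {}" "G \<noteq> {}"
    then show "opp (zz Ks F) (fsum a ((Ks(n := K)) n)) \<noteq> fsum (bb Ks) G"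
      using C unfolding Cond_def by simp
  qed
  ultimately show ?thesis unfolding PP_def by blast
qed

lemma main: "\<exists>b. sumsequence a b \<and>
           (\<forall>F G. finite F \<and> F \<noteq> {} \<and> finite G \<and> G \<noteq> {} \<and> F \<inter> G = {}
              \<longrightarrow> fsum b F \<noteq> fsum b G)"
proof -
  have "\<exists>x. PP 0 x" using Inv0 unfolding PP_def by blast
  moreover have "\<And>x n. PP n x \<Longrightarrow> \<exists>y. PP (Suc n) y \<and> QQ n x y" using PP_step by blast
  ultimately have "\<exists>f. \<forall>n. PP n (f n) \<and> QQ n (f n) (f (Suc n))" by (rule dependent_nat_choice)
  then obtain f where
    f: "\<And>n. PP n (f n)" "\<And>n. QQ n (f n) (f (Suc n))" by blast
  define KK where "KK i = f (Suc i) i" for i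
  have agree: "i < m \<Longrightarrow> f m i = KK i" for m i
  proof (induction m)
    case 0 then show ?case by simp
  next
    case (Suc m)
    have eq: "f (Suc m) = (f m)(m := f (Suc m) m)" using f(2)[of m] unfolding QQ_def by blast
    show ?case
    proof (cases "i = m")
      case True then show ?thesis unfolding KK_def by simp
    next
      case False
      then have "i < m" using Suc.prems by simp
      have "f (Suc m) i = f m i" using False by (subst eq) simp
      then show ?thesis using Suc.IH[OF \<open>i < m\<close>] by simp
    qed
  qed
  have KKne: "KK i \<noteq> {} \<and> finite (KK i)" for i
    using f(1)[of "Suc i"] unfolding PP_def KK_def by blast
  define b where "b = bb KK"
  have "sumsequence a b" unfolding sumsequence_def
  proof (intro exI[of _ KK] conjI allI)
    fix n
    show "finite (KK n)" using KKne by blast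
    show "KK n \<noteq> {}" using KKne by blast
    have "KK (Suc n) \<in> Bey (Nx (f (Suc n)) (Suc n))"
      using f(2)[of "Suc n"] unfolding QQ_def KK_def by blast
    then have "KK (Suc n) \<in> Bey (Max (KK n))" unfolding Nx_def KK_def by simp
    then show "set_less (KK n) (KK (Suc n))" using Bey_set_less KKne by blast
    show "b n = fsum a (KK n)" unfolding b_def bb_def by simp
  qed
  moreover
  have bagree: "fsum (bb (f m)) F = fsum b F" if "F \<subseteq> {..<m}" for m F
  proof (rule fsum_cong)
    show "finite F" using that finite_subset by blast
    show "bb (f m) i = b i" if "i \<in> F" for i
      using agree[of i m] \<open>F \<subseteq> {..<m}\<close> \<open>i \<in> F\<close> unfolding b_def bb_def by auto
  qed
  have zagree: "zz (f m) F = (if F = {} then None else Some (fsum b F))" if "F \<subseteq> {..<m}" for m F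
    using bagree[OF that] unfolding zz_def by simp
  have one: "fsum b F \<noteq> fsum b G"
    if h: "finite F" "F \<noteq> {}" "finite G" "G \<noteq> {}" "F \<inter> G = {}" "Max (F \<union> G) \<in> F" for F G
  proof -
    define m where "m = Max (F \<union> G)"
    have fin: "finite (F \<union> G)" using h by simp
    have le: "x \<le> m" if "x \<in> F \<union> G" for x unfolding m_def using Max_ge[OF fin that] .
    have mF: "m \<in> F" using h(6) unfolding m_def .
    have F'm: "F - {m} \<subseteq> {..<m}" using le by force
    have Gm: "G \<subseteq> {..<m}"
    proof
      fix x assume "x \<in> G"
      then have "x \<le> m" "x \<noteq> m" using le mF h(5) by auto
      then show "x \<in> {..<m}" by simp
    qed
    have "(F - {m}) \<inter> G = {}" using h(5) by blast
    then have neq: "opp (zz (f m) (F - {m})) (fsum a (f (Suc m) m)) \<noteq> fsum (bb (f m)) G"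
      using f(2)[of m] F'm Gm h(4) unfolding QQ_def by blast
    have bm: "fsum a (f (Suc m) m) = b m" unfolding b_def bb_def KK_def by simp
    have fF: "fsum b F = opp (zz (f m) (F - {m})) (b m)"
    proof (cases "F - {m} = {}")
      case True
      then have "F = {m}" using mF by blast
      then show ?thesis using True zagree[OF F'm] unfolding opp_def by simp
    next
      case False
      have Feq: "F = (F - {m}) \<union> {m}" using mF by blast
      have "set_less (F - {m}) {m}" using F'm unfolding set_less_def by auto
      moreover have "finite (F - {m})" using h(1) by simp
      ultimately have "fsum b ((F - {m}) \<union> {m}) = fsum b (F - {m}) + fsum b {m}"
        using fsum_Un[OF _ _ False] by blast
      then have "fsum b F = fsum b (F - {m}) + b m" using Feq by simp
      then show ?thesis using False zagree[OF F'm] unfolding opp_def by simp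
    qed
    show ?thesis using neq unfolding bm fF bagree[OF Gm] .
  qed
  have "\<forall>F G. finite F \<and> F \<noteq> {} \<and> finite G \<and> G \<noteq> {} \<and> F \<inter> G = {} \<longrightarrow> fsum b F \<noteq> fsum b G"
  proof (intro allI impI)
    fix F G :: "nat set" assume h: "finite F \<and> F \<noteq> {} \<and> finite G \<and> G \<noteq> {} \<and> F \<inter> G = {}"
    have "Max (F \<union> G) \<in> F \<union> G" using h by (intro Max_in) auto
    then show "fsum b F \<noteq> fsum b G"
    proof
      assume "Max (F \<union> G) \<in> F" then show ?thesis using one h by blast
    next
      assume "Max (F \<union> G) \<in> G"
      then have "Max (G \<union> F) \<in> G" by (simp add: Un_commute)
      moreover have "G \<inter> F = {}" using h by blast
      ultimately have "fsum b G \<noteq> fsum b F" using one h by blast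
      then show ?thesis by simp
    qed
  qed
  ultimately show ?thesis by blast
qed

end


theorem proposition5p2:
  fixes a :: "nat \<Rightarrow> 'a::semigroup_add"
  assumes "proper_seq a"
  shows "\<exists>b. sumsequence a b \<and>
           (\<forall>F G. finite F \<and> F \<noteq> {} \<and> finite G \<and> G \<noteq> {} \<and> F \<inter> G = {}
              \<longrightarrow> fsum b F \<noteq> fsum b G)"
proof -
  obtain e where e: "ultra e" "F0 \<subseteq> e" "star e e = e" using idem_exists by blast
  interpret idem e a using e assms by unfold_locales
  show ?thesis by (rule main)
qed

end
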